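(* Let $G=(V,w)$ be a weighted graph and let $\mathcal{L}$ be a maximal cross-free family of cuts of $V$. Suppose that $w(\Delta(X))=c$ for every cut $\Delta(X)\in\mathcal{L}$. Then the minimum cut weight of $G$ is $c$.
   Context: $G=(V,w)$ has nonnegative weights $w$ on unordered pairs of distinct vertices. A cut is identified by an unordered bipartition $\{X,V\setminus X\}$ with $\emptyset\ne X\subsetneq V$; $\Delta(X)$ denotes the set of pairs with exactly one endpoint in $X$, and $w(\Delta(X))$ is the sum of their weights. Sets $X,Y\subseteq V$ cross if $X\cap Y$, $X\setminus Y$, $Y\setminus X$, $V\setminus(X\cup Y)$ are all nonempty; cuts cross if their shores cross. A family of cuts is cross-free if no two members cross, and maximal cross-free if no other cut (bipartition of $V$) can be added while keeping it cross-free. *)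

theory Defs
  imports Complex_Main
begin

definition weighted_graph :: "'a set \<Rightarrow> ('a \<Rightarrow> 'a \<Rightarrow> real) \<Rightarrow> bool" where
  "weighted_graph V w \<longleftrightarrow> finite V \<and>
     (\<forall>x\<in>V. \<forall>y\<in>V. x \<noteq> y \<longrightarrow> w x y = w y x \<and> 0 \<le> w x y)"

definition is_cut :: "'a set \<Rightarrow> 'a set set \<Rightarrow> bool" where
  "is_cut V C \<longleftrightarrow> (\<exists>X. X \<noteq> {} \<and> X \<subset> V \<and> C = {X, V - X})"

text \<open>w(Delta(X)): each pair with exactly one endpoint in X counted once.\<close>
definition cut_weight :: "'a set \<Rightarrow> ('a \<Rightarrow> 'a \<Rightarrow> real) \<Rightarrow> 'a set \<Rightarrow> real" where
  "cut_weight V w X = (\<Sum>(x, y) \<in> X \<times> (V - X). w x y)"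

definition crosses :: "'a set \<Rightarrow> 'a set \<Rightarrow> 'a set \<Rightarrow> bool" where
  "crosses V X Y \<longleftrightarrow> X \<inter> Y \<noteq> {} \<and> X - Y \<noteq> {} \<and> Y - X \<noteq> {} \<and> V - (X \<union> Y) \<noteq> {}"

definition cuts_cross :: "'a set \<Rightarrow> 'a set set \<Rightarrow> 'a set set \<Rightarrow> bool" where
  "cuts_cross V C D \<longleftrightarrow> (\<exists>X\<in>C. \<exists>Y\<in>D. crosses V X Y)"

definition cross_free :: "'a set \<Rightarrow> 'a set set set \<Rightarrow> bool" where
  "cross_free V L \<longleftrightarrow> (\<forall>C\<in>L. \<forall>D\<in>L. \<not> cuts_cross V C D)"

definition maximal_cross_free :: "'a set \<Rightarrow> 'a set set set \<Rightarrow> bool" where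
  "maximal_cross_free V L \<longleftrightarrow> (\<forall>C\<in>L. is_cut V C) \<and> cross_free V L \<and>
     (\<forall>C. is_cut V C \<and> C \<notin> L \<longrightarrow> \<not> cross_free V (insert C L))"

definition min_cut_weight :: "'a set \<Rightarrow> ('a \<Rightarrow> 'a \<Rightarrow> real) \<Rightarrow> real" where
  "min_cut_weight V w = Min {cut_weight V w X | X. X \<noteq> {} \<and> X \<subset> V}"

end

theory Submission
  imports Defs
begin

lemma crosses_sym: "crosses V X Y = crosses V Y X"
  unfolding crosses_def by auto

lemma crosses_compl2: "X \<subseteq> V \<Longrightarrow> Y \<subseteq> V \<Longrightarrow> crosses V X (V - Y) = crosses V X Y"
  unfolding crosses_def by auto

lemma crosses_self: "\<not> crosses V X X"
  unfolding crosses_def by auto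

lemma crosses_compl_self: "\<not> crosses V X (V - X)"
  unfolding crosses_def by auto

lemma crosses_single: "\<not> crosses V {v} Y"
  unfolding crosses_def by auto

lemma cut_shores_sub: "is_cut V C \<Longrightarrow> Y \<in> C \<Longrightarrow> Y \<subseteq> V"
  unfolding is_cut_def by auto

lemma cut_compl_in: "is_cut V C \<Longrightarrow> Y \<in> C \<Longrightarrow> V - Y \<in> C"
  unfolding is_cut_def by auto

lemma addable:
  assumes m: "maximal_cross_free V L" and Z: "Z \<noteq> {}" "Z \<subset> V"
    and nc: "\<forall>D\<in>L. \<forall>Y\<in>D. \<not> crosses V Z Y"
  shows "{Z, V - Z} \<in> L"
proof (rule ccontr)
  assume nin: "{Z, V - Z} \<notin> L"
  have ic: "is_cut V {Z, V - Z}" unfolding is_cut_def using Z by blast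
  have allcut: "\<forall>C\<in>L. is_cut V C" and cf: "cross_free V L"
    using m unfolding maximal_cross_free_def by auto
  have nc2: "\<not> crosses V (V - Z) Y" if "D \<in> L" "Y \<in> D" for D Y
  proof -
    have "Y \<subseteq> V" using cut_shores_sub allcut that by blast
    have "crosses V (V - Z) Y = crosses V Y (V - Z)" by (rule crosses_sym)
    also have "\<dots> = crosses V Y Z" using crosses_compl2[of Y V Z] \<open>Y \<subseteq> V\<close> Z by auto
    also have "\<dots> = crosses V Z Y" by (rule crosses_sym)
    finally show ?thesis using nc that by blast
  qed
  have "cross_free V (insert {Z, V - Z} L)"
    unfolding cross_free_def
  proof (intro ballI)
    fix C D assume C: "C \<in> insert {Z, V - Z} L" and D: "D \<in> insert {Z, V - Z} L"
    have zz: "\<not> crosses V X Y" if "X \<in> {Z, V - Z}" "Y \<in> {Z, V - Z}" for X Y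
    proof -
      from that consider "X = Y" | "X = Z \<and> Y = V - Z" | "X = V - Z \<and> Y = Z" by auto
      then show ?thesis
      proof cases
        case 1 then show ?thesis by (simp add: crosses_self)
      next
        case 2 then show ?thesis by (simp add: crosses_compl_self)
      next
        case 3
        have "\<not> crosses V Z (V - Z)" by (rule crosses_compl_self)
        then show ?thesis using 3 crosses_sym[of V Z "V - Z"] by simp
      qed
    qed
    show "\<not> cuts_cross V C D"
      unfolding cuts_cross_def
    proof (intro notI, elim bexE)
      fix X Y assume X: "X \<in> C" and Y: "Y \<in> D" and cr: "crosses V X Y"
      show False
      proof (cases "C = {Z, V - Z}")
        case C1: True
        show False
        proof (cases "D = {Z, V - Z}")
          case True then show False using zz X Y cr C1 by blast
        next
          case False
          then have "D \<in> L" using D by blast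
          then show False using X Y cr C1 nc nc2 by blast
        qed
      next
        case C2: False
        then have CL: "C \<in> L" using C by blast
        show False
        proof (cases "D = {Z, V - Z}")
          case True
          have "crosses V Y X" using cr crosses_sym by blast
          then show False using X Y True CL nc nc2 by blast
        next
          case False
          then have "D \<in> L" using D by blast
          then show False using X Y cr CL cf unfolding cross_free_def cuts_cross_def by blast
        qed
      qed
    qed
  qed
  then show False using m nin ic unfolding maximal_cross_free_def by blast
qed

definition pr :: "('a \<Rightarrow> 'a \<Rightarrow> real) \<Rightarrow> 'a set \<Rightarrow> 'a set \<Rightarrow> real" where
  "pr w P Q = (\<Sum>(x, y) \<in> P \<times> Q. w x y)"

lemma cut_split:
  assumes "finite V" "P \<inter> Q = {}" "P \<union> Q \<subseteq> V"
  shows "cut_weight V w (P \<union> Q) = cut_weight V w P + cut_weight V w Q - pr w P Q - pr w Q P"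
proof -
  have fP: "finite P" "finite Q" using assms finite_subset by auto
  have e1: "P \<times> (V - P) = P \<times> (V - (P \<union> Q)) \<union> P \<times> Q" using assms by auto
  have e2: "Q \<times> (V - Q) = Q \<times> (V - (P \<union> Q)) \<union> Q \<times> P" using assms by auto
  have e3: "(P \<union> Q) \<times> (V - (P \<union> Q)) = P \<times> (V - (P \<union> Q)) \<union> Q \<times> (V - (P \<union> Q))" by auto
  have c1: "cut_weight V w P = (\<Sum>(x, y) \<in> P \<times> (V - (P \<union> Q)). w x y) + pr w P Q"
    unfolding cut_weight_def pr_def e1
    by (rule sum.union_disjoint) (use assms fP in auto)
  have c2: "cut_weight V w Q = (\<Sum>(x, y) \<in> Q \<times> (V - (P \<union> Q)). w x y) + pr w Q P"
    unfolding cut_weight_def pr_def e2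
    by (rule sum.union_disjoint) (use assms fP in auto)
  have c3: "cut_weight V w (P \<union> Q) = (\<Sum>(x, y) \<in> P \<times> (V - (P \<union> Q)). w x y) + (\<Sum>(x, y) \<in> Q \<times> (V - (P \<union> Q)). w x y)"
    unfolding cut_weight_def e3
    by (rule sum.union_disjoint) (use assms fP in auto)
  show ?thesis using c1 c2 c3 by simp
qed

lemma pr_mono:
  assumes "weighted_graph V w" "P' \<subseteq> P" "Q' \<subseteq> Q" "P \<inter> Q = {}" "P \<union> Q \<subseteq> V"
  shows "pr w P' Q' \<le> pr w P Q"
  unfolding pr_def
proof (rule sum_mono2)
  show "finite (P \<times> Q)" using assms unfolding weighted_graph_def
    by (meson finite_SigmaI finite_subset le_sup_iff)
  show "P' \<times> Q' \<subseteq> P \<times> Q" using assms by auto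
  fix b assume b: "b \<in> P \<times> Q - P' \<times> Q'"
  obtain x y where xy: "b = (x, y)" "x \<in> P" "y \<in> Q" using b by auto
  then have "x \<noteq> y" "x \<in> V" "y \<in> V" using assms(4,5) by auto
  then show "0 \<le> (case b of (x, y) \<Rightarrow> w x y)" using xy assms(1) unfolding weighted_graph_def by auto
qed

lemma cut_compl:
  assumes "weighted_graph V w" "X \<subseteq> V"
  shows "cut_weight V w (V - X) = cut_weight V w X"
proof -
  have fin: "finite V" using assms unfolding weighted_graph_def by auto
  have fX: "finite X" "finite (V - X)" using fin assms finite_subset by auto
  have "V - (V - X) = X" using assms by auto
  then have "cut_weight V w (V - X) = (\<Sum>x\<in>V - X. \<Sum>y\<in>X. w x y)"
    unfolding cut_weight_def using fX by (simp add: sum.cartesian_product)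
  also have "\<dots> = (\<Sum>y\<in>X. \<Sum>x\<in>V - X. w x y)" by (rule sum.swap)
  also have "\<dots> = (\<Sum>y\<in>X. \<Sum>x\<in>V - X. w y x)"
  proof (intro sum.cong refl)
    fix y x assume "y \<in> X" "x \<in> V - X"
    then have "x \<noteq> y" "x \<in> V" "y \<in> V" using assms(2) by auto
    then show "w x y = w y x" using assms(1) unfolding weighted_graph_def by auto
  qed
  also have "\<dots> = cut_weight V w X"
    unfolding cut_weight_def using fX by (simp add: sum.cartesian_product)
  finally show ?thesis .
qed

theorem lemma9:
  fixes V :: "'a set" and w :: "'a \<Rightarrow> 'a \<Rightarrow> real" and L :: "'a set set set" and c :: real
  assumes "weighted_graph V w"
    and "2 \<le> card V"
    and "maximal_cross_free V L"
    and "\<forall>C\<in>L. \<forall>X\<in>C. cut_weight V w X = c"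
  shows "min_cut_weight V w = c"
proof -
  note wg = assms(1) and m = assms(3) and wc = assms(4)
  have fin: "finite V" using wg unfolding weighted_graph_def by auto
  have allcut: "\<forall>C\<in>L. is_cut V C" and cf: "cross_free V L"
    using m unfolding maximal_cross_free_def by auto
  have ncL: "\<not> crosses V X Y" if "C \<in> L" "D \<in> L" "X \<in> C" "Y \<in> D" for C D X Y
    using cf that unfolding cross_free_def cuts_cross_def by blast
  have single: "{{v}, V - {v}} \<in> L" if "v \<in> V" for v
  proof -
    have "V \<noteq> {v}" proof
      assume "V = {v}" then have "card V = 1" by simp
      then show False using assms(2) by simp
    qed
    then have "{v} \<subset> V" using that by auto
    moreover have "\<forall>D\<in>L. \<forall>Y\<in>D. \<not> crosses V {v} Y" by (simp add: crosses_single)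
    ultimately show ?thesis using addable[OF m, of "{v}"] by blast
  qed
  have "V \<noteq> {}" proof
      assume "V = {}" then have "card V = 0" by simp
      then show False using assms(2) by simp
    qed
  then obtain r where r: "r \<in> V" by blast
  define F where "F = {S. r \<notin> S \<and> (\<exists>D\<in>L. S \<in> D)}"
  have Fsub: "S \<subseteq> V" if "S \<in> F" for S using that allcut cut_shores_sub unfolding F_def by blast
  have Fne: "S \<noteq> {}" if "S \<in> F" for S using that allcut unfolding F_def is_cut_def by blast
  have Fw: "cut_weight V w S = c" if "S \<in> F" for S using that wc unfolding F_def by blast
  have lam: "S \<subseteq> Y \<or> Y \<subseteq> S \<or> S \<inter> Y = {}" if "S \<in> F" "Y \<in> F" for S Y
  proof -
    have "\<not> crosses V S Y" using that ncL unfolding F_def by blast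
    then show ?thesis using that r unfolding crosses_def F_def by auto
  qed
  have sF: "{v} \<in> F" if "v \<in> V" "v \<noteq> r" for v
    using single[OF that(1)] that unfolding F_def by blast
  have split: "\<exists>A B. A \<in> F \<and> B \<in> F \<and> A \<noteq> {} \<and> B \<noteq> {} \<and> A \<inter> B = {} \<and> A \<union> B = S"
    if S: "S \<in> F" "2 \<le> card S" for S
  proof -
    define G where "G = {A \<in> F. A \<subset> S}"
    have finS: "finite S" using Fsub[OF S(1)] fin finite_subset by auto
    obtain v where v: "v \<in> S" using S(1) Fne by blast
    have "S \<noteq> {v}" using S(2) by auto
    then have "{v} \<in> G" unfolding G_def using sF v Fsub[OF S(1)] S(1) unfolding F_def by auto
    have finG: "finite G" unfolding G_def by (rule finite_subset[of _ "Pow S"]) (use finS in auto)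
    have "Max (card ` G) \<in> card ` G" using finG \<open>{v} \<in> G\<close> by (intro Max_in) auto
    then obtain A where A0: "A \<in> G" "card A = Max (card ` G)" by auto
    have A: "A \<in> G" "\<forall>Y\<in>G. card Y \<le> card A" using A0 finG by auto
    have AF: "A \<in> F" and AS: "A \<subset> S" using A(1) unfolding G_def by auto
    define B where "B = S - A"
    have Bne: "B \<noteq> {}" using AS unfolding B_def by auto
    have SV: "S \<subseteq> V" using Fsub[OF S(1)] .
    have rS: "r \<notin> S" using S(1) unfolding F_def by auto
    have BV: "B \<subset> V" using SV rS r unfolding B_def by auto
    have ncF: "\<not> crosses V B Y" if Y: "Y \<in> F" for Y
    proof -
      have finY: "finite Y" using Fsub[OF Y] fin finite_subset by auto
      consider "S \<subseteq> Y" | "S \<inter> Y = {}" | "Y \<subseteq> S" using lam[OF S(1) Y] by blast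
      then show ?thesis
      proof cases
        case 1 then show ?thesis unfolding crosses_def B_def by auto
      next
        case 2 then show ?thesis unfolding crosses_def B_def by auto
      next
        case 3
        note YS = 3
        consider "A \<subseteq> Y" | "Y \<subseteq> A" | "A \<inter> Y = {}" using lam[OF AF Y] by blast
        then show ?thesis
        proof cases
          case 1
          show ?thesis
          proof (cases "Y = S")
            case True then show ?thesis unfolding crosses_def B_def by auto
          next
            case False
            then have "Y \<in> G" using YS Y unfolding G_def by auto
            then have "card Y \<le> card A" using A(2) by auto
            then have "Y = A" using card_seteq[OF finY 1] by simp
            then show ?thesis unfolding crosses_def B_def by auto
          qed
        next
          case 2 then show ?thesis unfolding crosses_def B_def by auto
        next
          case 3
          then show ?thesis using YS unfolding crosses_def B_def by auto
        qed
      qed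
    qed
    have "\<forall>D\<in>L. \<forall>Y\<in>D. \<not> crosses V B Y"
    proof (intro ballI)
      fix D Y assume D: "D \<in> L" and Y: "Y \<in> D"
      have YV: "Y \<subseteq> V" using cut_shores_sub allcut D Y by blast
      show "\<not> crosses V B Y"
      proof (cases "r \<in> Y")
        case False
        then show ?thesis using ncF D Y unfolding F_def by blast
      next
        case True
        have "V - Y \<in> F" using cut_compl_in allcut D Y True unfolding F_def by blast
        then show ?thesis using ncF crosses_compl2[of B V Y] BV YV by auto
      qed
    qed
    then have "{B, V - B} \<in> L" using addable[OF m Bne BV] by blast
    then have BF: "B \<in> F" using rS unfolding F_def B_def by blast
    show ?thesis
      by (rule exI[of _ A], rule exI[of _ B]) (use AF BF Fne Bne AS in \<open>auto simp: B_def\<close>)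
  qed
  have main: "\<forall>X. X \<noteq> {} \<longrightarrow> X \<subseteq> S \<longrightarrow> c \<le> cut_weight V w X" if "S \<in> F" for S
    using that
  proof (induction "card S" arbitrary: S rule: less_induct)
    case less
    have SV: "S \<subseteq> V" using Fsub[OF less.prems] .
    have finS: "finite S" using SV fin finite_subset by auto
    show ?case
    proof (cases "2 \<le> card S")
      case False
      have "card S \<noteq> 0" using Fne[OF less.prems] finS by auto
      then have "card S = 1" using False by auto
      then obtain v where "S = {v}" using card_1_singletonE by blast
      then show ?thesis using Fw[OF less.prems] by (metis order_refl subset_singletonD)
    next
      case True
      obtain A B where AB: "A \<in> F" "B \<in> F" "A \<noteq> {}" "B \<noteq> {}" "A \<inter> B = {}" "A \<union> B = S"
        using split[OF less.prems True] by blast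
      have fA: "finite A" "finite B" using AB finS finite_subset by auto
      have cA: "card A < card S" using AB fA finS by (metis card_Un_disjoint card_gt_0_iff less_add_same_cancel1)
      have cB: "card B < card S" using AB fA finS by (metis card_Un_disjoint card_gt_0_iff less_add_same_cancel2)
      have IA: "\<forall>X. X \<noteq> {} \<longrightarrow> X \<subseteq> A \<longrightarrow> c \<le> cut_weight V w X" using less.hyps[OF cA AB(1)] .
      have IB: "\<forall>X. X \<noteq> {} \<longrightarrow> X \<subseteq> B \<longrightarrow> c \<le> cut_weight V w X" using less.hyps[OF cB AB(2)] .
      have sumAB: "pr w A B + pr w B A = c"
      proof -
        have "cut_weight V w S = cut_weight V w A + cut_weight V w B - pr w A B - pr w B A"
          using cut_split[OF fin AB(5), of w] AB SV by simp
        moreover have "cut_weight V w S = c" using Fw less.prems by blast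
        moreover have "cut_weight V w A = c" "cut_weight V w B = c" using Fw AB by blast+
        ultimately show ?thesis by linarith
      qed
      show ?thesis
      proof (intro allI impI)
        fix X assume X: "X \<noteq> {}" "X \<subseteq> S"
        show "c \<le> cut_weight V w X"
        proof (cases "X \<subseteq> A \<or> X \<subseteq> B")
          case True then show ?thesis using IA IB X by blast
        next
          case False
          define XA where "XA = X \<inter> A"
          define XB where "XB = X \<inter> B"
          have ne: "XA \<noteq> {}" "XB \<noteq> {}" using False X AB unfolding XA_def XB_def by auto
          have XU: "X = XA \<union> XB" using X AB unfolding XA_def XB_def by auto
          have d: "XA \<inter> XB = {}" "XA \<union> XB \<subseteq> V" using AB SV X unfolding XA_def XB_def by auto
          have "cut_weight V w X = cut_weight V w XA + cut_weight V w XB - pr w XA XB - pr w XB XA"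
            using cut_split[OF fin d] XU by simp
          moreover have "c \<le> cut_weight V w XA" using IA ne unfolding XA_def by auto
          moreover have "c \<le> cut_weight V w XB" using IB ne unfolding XB_def by auto
          moreover have "pr w XA XB \<le> pr w A B"
            using pr_mono[OF wg, of XA A XB B] AB SV unfolding XA_def XB_def by auto
          moreover have "pr w XB XA \<le> pr w B A"
            using pr_mono[OF wg, of XB B XA A] AB SV unfolding XA_def XB_def by auto
          ultimately show ?thesis using sumAB by linarith
        qed
      qed
    qed
  qed
  have S0: "V - {r} \<in> F" using single[OF r] unfolding F_def by blast
  have lb: "c \<le> cut_weight V w X" if "X \<noteq> {}" "X \<subset> V" for X
  proof (cases "r \<in> X")
    case False then show ?thesis using main[OF S0] that by auto
  next
    case True
    have "V - X \<noteq> {}" "V - X \<subseteq> V - {r}" using that True by auto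
    then have "c \<le> cut_weight V w (V - X)" using main[OF S0] by auto
    then show ?thesis using cut_compl[OF wg] that by auto
  qed
  have "V \<noteq> {r}" using assms(2) by auto
  then have rV: "{r} \<noteq> {} \<and> {r} \<subset> V" using r by auto
  have cr: "cut_weight V w {r} = c" using single[OF r] wc by blast
  let ?M = "{cut_weight V w X | X. X \<noteq> {} \<and> X \<subset> V}"
  have finM: "finite ?M"
  proof -
    have "?M \<subseteq> cut_weight V w ` Pow V" by auto
    then show ?thesis using fin finite_subset by blast
  qed
  have "c \<in> ?M" using rV cr by force
  moreover have "\<forall>y\<in>?M. c \<le> y" using lb by blast
  ultimately have "Min ?M = c" using finM by (intro Min_eqI) auto
  then show ?thesis unfolding min_cut_weight_def .
qed

end
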